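(* Let $\epsilon\in\{\pm1\}$, and let $S$ ($n\times n$), $V$ ($n\times m_1$), $\bar V$ ($n\times m_2$) be constant complex matrices, and $K,\bar K$ constant Hermitian $n\times n$ matrices solving $$SK+KS^\dagger=VV^\dagger,\qquad S^\dagger\bar K+\bar KS=\bar V\bar V^\dagger.$$ Then, with $\Xi=e^{-xS-\mathrm{i}tS^2}$ ($x,t\in\mathbb{R}$), the function $$q=V^\dagger\big((\Xi^\dagger)^{-1}-\epsilon\bar K\Xi K\big)^{-1}\bar V$$ (wherever the inverse exists) solves the $m_1\times m_2$ matrix NLS equation $\mathrm{i}q_t+q_{xx}-2\epsilon qq^\dagger q=0$.
   Context: ${}^\dagger$ denotes conjugate transpose. *)

theory Defs
  imports "HOL-Analysis.Analysis"
begin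

definition cadj :: "complex^'n^'m \<Rightarrow> complex^'m^'n" where
  "cadj A = (\<chi> i j. cnj (A $ j $ i))"

definition msc :: "complex \<Rightarrow> complex^'n^'m \<Rightarrow> complex^'n^'m" where
  "msc c A = (\<chi> i j. c * A $ i $ j)"

fun mpow :: "complex^'n^'n \<Rightarrow> nat \<Rightarrow> complex^'n^'n" where
  "mpow A 0 = mat 1"
| "mpow A (Suc k) = A ** mpow A k"

definition mexp :: "complex^'n^'n \<Rightarrow> complex^'n^'n" where
  "mexp A = (\<Sum>k. (1 / fact k) *\<^sub>R mpow A k)"

definition Xi :: "complex^'n^'n \<Rightarrow> real \<Rightarrow> real \<Rightarrow> complex^'n^'n" where
  "Xi S x t = mexp (- msc (complex_of_real x) S - msc (\<i> * complex_of_real t) (S ** S))"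

definition Mmat :: "real \<Rightarrow> complex^'n^'n \<Rightarrow> complex^'n^'n \<Rightarrow> complex^'n^'n \<Rightarrow> real \<Rightarrow> real \<Rightarrow> complex^'n^'n" where
  "Mmat \<epsilon> S K Kbar x t = matrix_inv (cadj (Xi S x t)) - msc (complex_of_real \<epsilon>) (Kbar ** Xi S x t ** K)"

definition qsol :: "real \<Rightarrow> complex^'n^'n \<Rightarrow> complex^'n^'n \<Rightarrow> complex^'n^'n \<Rightarrow> complex^'m1^'n \<Rightarrow> complex^'m2^'n \<Rightarrow> real \<Rightarrow> real \<Rightarrow> complex^'m2^'m1" where
  "qsol \<epsilon> S K Kbar V Vbar x t = cadj V ** matrix_inv (Mmat \<epsilon> S K Kbar x t) ** Vbar"

end

theory Submission
  imports Defs
begin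

typedef (overloaded) 'n endo = "UNIV :: ((complex^'n) \<Rightarrow>\<^sub>L (complex^'n)) set"
  morphisms rep abs by simp

setup_lifting type_definition_endo

instantiation endo :: (finite) real_normed_algebra_1
begin

lift_definition norm_endo :: "'a endo \<Rightarrow> real" is norm .
lift_definition minus_endo :: "'a endo \<Rightarrow> 'a endo \<Rightarrow> 'a endo" is "(-)" .
lift_definition plus_endo :: "'a endo \<Rightarrow> 'a endo \<Rightarrow> 'a endo" is "(+)" .
lift_definition uminus_endo :: "'a endo \<Rightarrow> 'a endo" is uminus .
lift_definition zero_endo :: "'a endo" is 0 .
lift_definition one_endo :: "'a endo" is id_blinfun .
lift_definition times_endo :: "'a endo \<Rightarrow> 'a endo \<Rightarrow> 'a endo" is "(o\<^sub>L)" .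
lift_definition scaleR_endo :: "real \<Rightarrow> 'a endo \<Rightarrow> 'a endo" is "scaleR" .

definition dist_endo :: "'a endo \<Rightarrow> 'a endo \<Rightarrow> real"
  where "dist_endo a b = norm (a - b)"

definition uniformity_endo :: "('a endo \<times> 'a endo) filter" where
  "uniformity_endo = (INF e\<in>{0 <..}. principal {(x, y). dist x y < e})"

definition open_endo :: "'a endo set \<Rightarrow> bool"
  where "open_endo S = (\<forall>x\<in>S. \<forall>\<^sub>F (x', y) in uniformity. x' = x \<longrightarrow> y \<in> S)"

definition sgn_endo :: "'a endo \<Rightarrow> 'a endo"
  where "sgn_endo x = scaleR (inverse (norm x)) x"

instance
proof
  fix a b c :: "'a endo" and r s :: real
  show "a + b + c = a + (b + c)" by transfer (simp add: add.assoc)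
  show "a + b = b + a" by transfer (simp add: add.commute)
  show "0 + a = a" by transfer simp
  show "- a + a = 0" by transfer simp
  show "a - b = a + - b" by transfer simp
  show "r *\<^sub>R (a + b) = r *\<^sub>R a + r *\<^sub>R b" by transfer (simp add: scaleR_add_right)
  show "(r + s) *\<^sub>R a = r *\<^sub>R a + s *\<^sub>R a" by transfer (simp add: scaleR_add_left)
  show "r *\<^sub>R s *\<^sub>R a = (r * s) *\<^sub>R a" by transfer simp
  show "1 *\<^sub>R a = a" by transfer simp
  show "a * b * c = a * (b * c)" by transfer (auto intro!: blinfun_eqI)
  show "(a + b) * c = a * c + b * c" by transfer (auto intro!: blinfun_eqI simp: blinfun.bilinear_simps)
  show "a * (b + c) = a * b + a * c" by transfer (auto intro!: blinfun_eqI simp: blinfun.bilinear_simps)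
  show "1 * a = a" by transfer (auto intro!: blinfun_eqI)
  show "a * 1 = a" by transfer (auto intro!: blinfun_eqI)
  show "(0::'a endo) \<noteq> 1"
  proof transfer
    have "blinfun_apply (id_blinfun :: (complex^'a) \<Rightarrow>\<^sub>L (complex^'a)) (axis undefined 1) \<noteq> 0"
      by (simp add: axis_nth vec_eq_iff) (metis axis_nth one_neq_zero)
    then show "(0::(complex^'a) \<Rightarrow>\<^sub>L (complex^'a)) \<noteq> id_blinfun" by (metis blinfun.zero_left)
  qed
  show "r *\<^sub>R a * b = r *\<^sub>R (a * b)" by transfer (auto intro!: blinfun_eqI simp: blinfun.bilinear_simps)
  show "a * r *\<^sub>R b = r *\<^sub>R (a * b)" by transfer (auto intro!: blinfun_eqI simp: blinfun.bilinear_simps)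
  show "norm (a * b) \<le> norm a * norm b" by transfer (rule norm_blinfun_compose)
  show "norm (1::'a endo) = 1" by transfer simp
  show "dist a b = norm (a - b)" by (simp add: dist_endo_def)
  show "sgn a = inverse (norm a) *\<^sub>R a" by (simp add: sgn_endo_def)
  show "(uniformity :: ('a endo \<times> 'a endo) filter) = (INF e\<in>{0 <..}. principal {(x, y). dist x y < e})"
    by (simp add: uniformity_endo_def)
  show "\<And>U :: 'a endo set. open U = (\<forall>x\<in>U. \<forall>\<^sub>F (x', y) in uniformity. x' = x \<longrightarrow> y \<in> U)"
    by (simp add: open_endo_def)
  show "norm (a + b) \<le> norm a + norm b" by transfer (rule norm_triangle_ineq)
  show "norm (r *\<^sub>R a) = \<bar>r\<bar> * norm a" by transfer simp
  show "(norm a = 0) = (a = 0)" by transfer simp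
qed
end

lemma dist_endo_rep: "dist a b = dist (rep a) (rep b)"
  by (simp add: dist_endo_def dist_norm norm_endo.rep_eq minus_endo.rep_eq)

instance endo :: (finite) banach
proof
  fix X :: "nat \<Rightarrow> 'a endo"
  assume "Cauchy X"
  then have "Cauchy (\<lambda>n. rep (X n))"
    unfolding Cauchy_def by (simp add: dist_endo_rep)
  then obtain L where L: "(\<lambda>n. rep (X n)) \<longlonglongrightarrow> L"
    using convergent_def Cauchy_convergent_iff by blast
  have "X \<longlonglongrightarrow> abs L"
    using L unfolding lim_sequentially by (simp add: dist_endo_rep abs_inverse)
  then show "convergent X" by (auto simp: convergent_def)
qed

lemma mv_scaleR: "(A::complex^'n^'m) *v (c *\<^sub>R v) = c *\<^sub>R (A *v v)"
  by (simp add: vec_eq_iff matrix_vector_mult_def scaleR_sum_right)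

lemma mv_add: "(A::complex^'n^'m) *v (u + v) = A *v u + A *v v"
  by (simp add: matrix_vector_right_distrib)

lemma linear_mv: "linear (\<lambda>v. (A::complex^'n^'m) *v v)"
  by (rule linearI) (simp_all add: mv_add mv_scaleR)

lemma bl_mv: "bounded_linear (\<lambda>v. (A::complex^'n^'m) *v v)"
  using linear_mv linear_conv_bounded_linear by blast

definition emb :: "complex^'n^'n \<Rightarrow> 'n endo" where
  "emb A = abs (Blinfun (\<lambda>v. A *v v))"

definition unemb :: "'n endo \<Rightarrow> complex^'n^'n" where
  "unemb F = (\<chi> i j. blinfun_apply (rep F) (axis j 1) $ i)"

lemma rep_emb: "blinfun_apply (rep (emb A)) v = A *v v"
  by (simp add: emb_def abs_inverse bounded_linear_Blinfun_apply[OF bl_mv])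

lemma emb_mult: "emb (A ** B) = emb A * emb B"
  by (rule rep_inject[THEN iffD1], rule blinfun_eqI)
     (simp add: times_endo.rep_eq rep_emb matrix_vector_mul_assoc)

lemma emb_one: "emb (mat 1) = 1"
  by (rule rep_inject[THEN iffD1], rule blinfun_eqI)
     (simp add: one_endo.rep_eq rep_emb)

lemma mv_axis: "((A::complex^'n^'m) *v axis j 1) $ i = A $ i $ j"
  by (simp add: matrix_vector_mult_def axis_def if_distrib cong: if_cong)

lemma unemb_emb: "unemb (emb A) = A"
  by (simp add: unemb_def rep_emb mv_axis vec_eq_iff)

lemma emb_add: "emb (A + B) = emb A + emb B"
  by (rule rep_inject[THEN iffD1], rule blinfun_eqI)
     (simp add: plus_endo.rep_eq plus_blinfun.rep_eq rep_emb matrix_vector_mult_add_rdistrib)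

lemma mv_scaleR_left: "((c *\<^sub>R A)::complex^'n^'m) *v v = c *\<^sub>R (A *v v)"
  by (simp add: vec_eq_iff matrix_vector_mult_def scaleR_sum_right)

lemma emb_scaleR: "emb (c *\<^sub>R A) = c *\<^sub>R emb A"
  by (rule rep_inject[THEN iffD1], rule blinfun_eqI)
     (simp add: scaleR_endo.rep_eq scaleR_blinfun.rep_eq rep_emb mv_scaleR_left)

lemma linear_emb: "linear (emb :: complex^'n^'n \<Rightarrow> 'n endo)"
  by (rule linearI) (simp_all add: emb_add emb_scaleR)

lemma bl_emb: "bounded_linear (emb :: complex^'n^'n \<Rightarrow> 'n endo)"
  using linear_emb linear_conv_bounded_linear by blast

lemma norm_axis_c: "norm (axis j (1::complex)) = 1"
proof -
  have "norm (axis j (1::complex)) = L2_set (\<lambda>i. norm (axis j (1::complex) $ i)) UNIV"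
    by (simp add: norm_vec_def)
  also have "\<dots> = L2_set (\<lambda>i. if i = j then 1 else 0) UNIV"
    by (rule L2_set_cong) (auto simp: axis_def)
  also have "\<dots> = 1"
    by (simp add: L2_set_def if_distrib[of "\<lambda>x. x^2"] cong: if_cong)
  finally show ?thesis .
qed

lemma norm_vec_le_sum: "norm (x::'b::real_normed_vector^'n) \<le> (\<Sum>i\<in>UNIV. norm (x $ i))"
  by (simp add: norm_vec_def L2_set_le_sum)

lemma unemb_scaleR: "unemb (r *\<^sub>R F) = r *\<^sub>R unemb F"
  by (simp add: unemb_def vec_eq_iff scaleR_endo.rep_eq blinfun.bilinear_simps)

lemma bl_unemb: "bounded_linear (unemb :: 'n endo \<Rightarrow> complex^'n^'n)"
proof (rule bounded_linear_intro[where K = "of_nat (CARD('n) * CARD('n))"])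
  fix F G :: "'n endo" and r :: real
  show "unemb (F + G) = unemb F + unemb G"
    by (simp add: unemb_def vec_eq_iff plus_endo.rep_eq blinfun.bilinear_simps)
  show "unemb (r *\<^sub>R F) = r *\<^sub>R unemb F"
    by (simp add: unemb_def vec_eq_iff scaleR_endo.rep_eq blinfun.bilinear_simps)
  have e: "norm (unemb F $ i $ j) \<le> norm F" for i j
  proof -
    have "norm (unemb F $ i $ j) = norm (blinfun_apply (rep F) (axis j 1) $ i)"
      by (simp add: unemb_def)
    also have "\<dots> \<le> norm (blinfun_apply (rep F) (axis j 1))" by (rule Finite_Cartesian_Product.norm_nth_le)
    also have "\<dots> \<le> norm (rep F) * norm (axis j (1::complex))" by (rule norm_blinfun)
    also have "\<dots> = norm F" by (simp add: norm_axis_c norm_endo.rep_eq)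
    finally show ?thesis .
  qed
  have "norm (unemb F) \<le> (\<Sum>i\<in>UNIV. norm (unemb F $ i))" by (rule norm_vec_le_sum)
  also have "\<dots> \<le> (\<Sum>i\<in>(UNIV::'n set). (\<Sum>j\<in>(UNIV::'n set). norm F))"
    by (rule sum_mono, rule order_trans[OF norm_vec_le_sum], rule sum_mono, rule e)
  also have "\<dots> = norm F * of_nat (CARD('n) * CARD('n))" by simp
  finally show "norm (unemb F) \<le> norm F * of_nat (CARD('n) * CARD('n))" .
qed

lemma emb_inj: "emb A = emb B \<Longrightarrow> A = B"
  by (metis unemb_emb)

lemma emb_mpow: "emb (mpow A k) = emb A ^ k"
  by (induction k) (simp_all add: emb_one emb_mult)

lemma emb_mexp: "emb (mexp A) = exp (emb A)"
proof -
  have "(\<lambda>k. emb A ^ k /\<^sub>R fact k) sums exp (emb A)" by (rule exp_converges)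
  then have s1: "(\<lambda>k. unemb (emb A ^ k /\<^sub>R fact k)) sums unemb (exp (emb A))"
    by (rule bounded_linear.sums[OF bl_unemb])
  have eq: "unemb (emb A ^ k /\<^sub>R fact k) = (1 / fact k) *\<^sub>R mpow A k" for k
    by (simp add: unemb_scaleR emb_mpow[symmetric] unemb_emb divide_inverse_commute)
  have eq2: "emb ((1 / fact k) *\<^sub>R mpow A k) = emb A ^ k /\<^sub>R fact k" for k
    by (simp add: emb_scaleR emb_mpow divide_inverse_commute)
  have s2: "(\<lambda>k. (1 / fact k) *\<^sub>R mpow A k) sums unemb (exp (emb A))"
    using s1 unfolding eq .
  have "mexp A = unemb (exp (emb A))"
    unfolding mexp_def using s2 by (rule sums_unique[symmetric])
  have "(\<lambda>k. emb ((1 / fact k) *\<^sub>R mpow A k)) sums emb (mexp A)"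
    unfolding mexp_def using bounded_linear.sums[OF bl_emb summable_sums[OF sums_summable[OF s2]]] .
  then have "(\<lambda>k. emb A ^ k /\<^sub>R fact k) sums emb (mexp A)" unfolding eq2 .
  then show ?thesis using exp_converges sums_unique2 by blast
qed

lemma mm_scaleR_left: "((c *\<^sub>R A)::complex^'n^'m) ** (B::complex^'p^'n) = c *\<^sub>R (A ** B)"
  by (simp add: vec_eq_iff matrix_matrix_mult_def scaleR_sum_right)

lemma mm_scaleR_right: "(A::complex^'n^'m) ** ((c *\<^sub>R B)::complex^'p^'n) = c *\<^sub>R (A ** B)"
  by (simp add: vec_eq_iff matrix_matrix_mult_def scaleR_sum_right)

lemma matrix_add_rdistrib': "((A::complex^'n^'m) + B) ** (C::complex^'p^'n) = A ** C + B ** C"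
  by (simp add: vec_eq_iff matrix_matrix_mult_def sum.distrib distrib_right)

lemma bilinear_mm: "bilinear (\<lambda>(A::complex^'n^'m) (B::complex^'p^'n). A ** B)"
  unfolding bilinear_def
  by (auto intro!: linearI simp: matrix_add_ldistrib matrix_add_rdistrib' mm_scaleR_left mm_scaleR_right)

lemma bb_mm: "bounded_bilinear (\<lambda>(A::complex^'n^'m) (B::complex^'p^'n). A ** B)"
  using bilinear_mm bilinear_conv_bounded_bilinear by blast

lemma cadj_add: "cadj (A + B) = cadj A + cadj B"
  by (simp add: cadj_def vec_eq_iff)
lemma cadj_diff: "cadj (A - B) = cadj A - cadj B"
  by (simp add: cadj_def vec_eq_iff)
lemma cadj_minus: "cadj (- A) = - cadj A"
  by (simp add: cadj_def vec_eq_iff)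
lemma cadj_scaleR: "cadj (c *\<^sub>R A) = c *\<^sub>R cadj A"
  by (simp add: cadj_def vec_eq_iff)
lemma cadj_cadj[simp]: "cadj (cadj A) = A"
  by (simp add: cadj_def vec_eq_iff)
lemma cadj_mm: "cadj ((A::complex^'n^'m) ** (B::complex^'p^'n)) = cadj B ** cadj A"
  by (simp add: cadj_def vec_eq_iff matrix_matrix_mult_def mult.commute)
lemma cadj_one[simp]: "cadj (mat 1) = mat 1"
  by (simp add: cadj_def vec_eq_iff mat_def)
lemma cadj_msc: "cadj (msc c A) = msc (cnj c) (cadj A)"
  by (simp add: cadj_def msc_def vec_eq_iff)

lemma linear_cadj: "linear (cadj :: complex^'n^'m \<Rightarrow> complex^'m^'n)"
  by (rule linearI) (simp_all add: cadj_add cadj_scaleR)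
lemma bl_cadj: "bounded_linear (cadj :: complex^'n^'m \<Rightarrow> complex^'m^'n)"
  using linear_cadj linear_conv_bounded_linear by blast

lemma msc_real: "msc (complex_of_real r) A = r *\<^sub>R A"
  by (simp add: msc_def vec_eq_iff of_real_def)
lemma msc_add: "msc c (A + B) = msc c A + msc c B"
  by (simp add: msc_def vec_eq_iff algebra_simps)
lemma msc_diff: "msc c (A - B) = msc c A - msc c B"
  by (simp add: msc_def vec_eq_iff algebra_simps)
lemma msc_minus: "msc c (- A) = - msc c A"
  by (simp add: msc_def vec_eq_iff)
lemma msc_scaleR: "msc c (r *\<^sub>R A) = r *\<^sub>R msc c A"
  by (simp add: msc_def vec_eq_iff)
lemma msc_msc: "msc c (msc d A) = msc (c * d) A"
  by (simp add: msc_def vec_eq_iff)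
lemma msc_one[simp]: "msc 1 A = A"
  by (simp add: msc_def vec_eq_iff)
lemma msc_mm_left: "msc c (A::complex^'n^'m) ** (B::complex^'p^'n) = msc c (A ** B)"
  by (simp add: msc_def vec_eq_iff matrix_matrix_mult_def sum_distrib_left mult.assoc)
lemma msc_mm_right: "(A::complex^'n^'m) ** msc c (B::complex^'p^'n) = msc c (A ** B)"
  by (simp add: msc_def vec_eq_iff matrix_matrix_mult_def sum_distrib_left algebra_simps)
lemma linear_msc: "linear (msc c :: complex^'n^'m \<Rightarrow> complex^'n^'m)"
  by (rule linearI) (simp_all add: msc_add msc_scaleR)
lemma bl_msc: "bounded_linear (msc c :: complex^'n^'m \<Rightarrow> complex^'n^'m)"
  using linear_msc linear_conv_bounded_linear by blast

lemma matrix_sub_ldistrib': "(A::complex^'n^'m) ** ((B::complex^'p^'n) - C) = A ** B - A ** C"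
  by (simp add: vec_eq_iff matrix_matrix_mult_def sum_subtractf right_diff_distrib)
lemma matrix_sub_rdistrib': "((A::complex^'n^'m) - B) ** (C::complex^'p^'n) = A ** C - B ** C"
  by (simp add: vec_eq_iff matrix_matrix_mult_def sum_subtractf left_diff_distrib)
lemma matrix_neg_left': "(- (A::complex^'n^'m)) ** (C::complex^'p^'n) = - (A ** C)"
  by (simp add: vec_eq_iff matrix_matrix_mult_def sum_negf)
lemma matrix_neg_right': "(A::complex^'n^'m) ** (- (C::complex^'p^'n)) = - (A ** C)"
  by (simp add: vec_eq_iff matrix_matrix_mult_def sum_negf)

lemma emb_minus: "emb (- A) = - emb A"
  using emb_scaleR[of "-1" A] by simp
lemma emb_diff: "emb (A - B) = emb A - emb B"
  using emb_add[of A "- B"] by (simp add: emb_minus)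

lemma mexp_inv1: "mexp C ** mexp (- C) = mat 1"
  by (rule emb_inj) (simp add: emb_mult emb_mexp emb_minus emb_one exp_minus_inverse)
lemma mexp_inv2: "mexp (- C) ** mexp C = mat 1"
  using mexp_inv1[of "- C"] by simp

lemma exp_commute_gen:
  fixes a b :: "'a::{real_normed_algebra_1,banach}"
  assumes "a * b = b * a"
  shows "a * exp b = exp b * a"
proof -
  have "(\<lambda>k. a * (b ^ k /\<^sub>R fact k)) sums (a * exp b)"
    by (rule bounded_linear.sums[OF bounded_linear_mult_right exp_converges])
  moreover have "(\<lambda>k. (b ^ k /\<^sub>R fact k) * a) sums (exp b * a)"
    by (rule bounded_linear.sums[OF bounded_linear_mult_left exp_converges])
  moreover have "a * (b ^ k /\<^sub>R fact k) = (b ^ k /\<^sub>R fact k) * a" for k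
    using power_commuting_commutes[OF assms[symmetric], of k] by simp
  ultimately show ?thesis using sums_unique2 by force
qed

lemma mexp_commute: "A ** B = B ** A \<Longrightarrow> A ** mexp B = mexp B ** A"
  apply (rule emb_inj)
  apply (simp add: emb_mult emb_mexp)
  apply (rule exp_commute_gen)
  apply (metis emb_mult)
  done

lemma mexp_deriv:
  assumes "A ** C = C ** A"
  shows "((\<lambda>s. mexp (s *\<^sub>R A + C)) has_vector_derivative (A ** mexp (s *\<^sub>R A + C))) (at s)"
proof -
  have com: "(s *\<^sub>R emb A) * emb C = emb C * (s *\<^sub>R emb A)" for s
    using arg_cong[OF assms, of emb] by (simp add: emb_mult)
  have e: "mexp (s *\<^sub>R A + C) = unemb (exp (s *\<^sub>R emb A) * exp (emb C))" for s
  proof -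
    have "exp (s *\<^sub>R emb A) * exp (emb C) = exp (emb (s *\<^sub>R A + C))"
      by (simp add: exp_add_commuting[OF com, symmetric] emb_add emb_scaleR)
    then show ?thesis by (simp add: emb_mexp[symmetric] unemb_emb)
  qed
  have "((\<lambda>s. exp (s *\<^sub>R emb A) * exp (emb C)) has_vector_derivative
        (emb A * exp (s *\<^sub>R emb A)) * exp (emb C)) (at s)"
    using has_vector_derivative_mult[OF exp_scaleR_has_vector_derivative_left[of "emb A" s]
        has_vector_derivative_const[of "exp (emb C)"]] by simp
  from bounded_linear.has_vector_derivative[OF bl_unemb this]
  have "((\<lambda>s. mexp (s *\<^sub>R A + C)) has_vector_derivative unemb ((emb A * exp (s *\<^sub>R emb A)) * exp (emb C))) (at s)"
    unfolding e .
  moreover have "unemb ((emb A * exp (s *\<^sub>R emb A)) * exp (emb C)) = A ** mexp (s *\<^sub>R A + C)"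
  proof -
    have "exp (s *\<^sub>R emb A) * exp (emb C) = exp (emb (s *\<^sub>R A + C))"
      by (simp add: exp_add_commuting[OF com, symmetric] emb_add emb_scaleR)
    also have "\<dots> = emb (mexp (s *\<^sub>R A + C))" by (simp add: emb_mexp)
    finally have "(emb A * exp (s *\<^sub>R emb A)) * exp (emb C) = emb (A ** mexp (s *\<^sub>R A + C))"
      by (simp add: mult.assoc emb_mult)
    then show ?thesis by (simp add: unemb_emb)
  qed
  ultimately show ?thesis by simp
qed

lemma vd_iff:
  fixes g :: "real \<Rightarrow> 'a::real_normed_vector"
  shows "(g has_vector_derivative D) (at y) \<longleftrightarrow> ((\<lambda>z. (g z - g y) /\<^sub>R (z - y)) \<longlongrightarrow> D) (at y)"
proof -
  let ?R = "\<lambda>z. ((g z - g y) - (z - y) *\<^sub>R D) /\<^sub>R norm (z - y)"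
  have ev: "\<forall>\<^sub>F z in at y. norm (?R z) = norm ((g z - g y) /\<^sub>R (z - y) - D)"
  proof -
    have "norm (?R z) = norm ((g z - g y) /\<^sub>R (z - y) - D)" if "z \<noteq> y" for z
    proof -
      have "(g z - g y) - (z - y) *\<^sub>R D = (z - y) *\<^sub>R ((g z - g y) /\<^sub>R (z - y) - D)"
        using that by (simp add: scaleR_diff_right)
      then show ?thesis using that by (simp add: abs_mult)
    qed
    then show ?thesis by (auto simp: eventually_at_filter)
  qed
  have "(g has_vector_derivative D) (at y) \<longleftrightarrow> (?R \<longlongrightarrow> 0) (at y)"
    unfolding has_vector_derivative_def has_derivative_at_within
    by (simp add: bounded_linear_scaleR_left)
  also have "\<dots> \<longleftrightarrow> ((\<lambda>z. norm (?R z)) \<longlongrightarrow> 0) (at y)"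
    by (rule tendsto_norm_zero_iff[symmetric])
  also have "\<dots> \<longleftrightarrow> ((\<lambda>z. norm ((g z - g y) /\<^sub>R (z - y) - D)) \<longlongrightarrow> 0) (at y)"
    by (rule tendsto_cong[OF ev])
  also have "\<dots> \<longleftrightarrow> ((\<lambda>z. (g z - g y) /\<^sub>R (z - y)) \<longlongrightarrow> D) (at y)"
    by (simp add: tendsto_norm_zero_iff LIM_zero_iff)
  finally show ?thesis .
qed

lemma minv_both:
  assumes "invertible (A::'a::semiring_1^'n^'m)"
  shows "A ** matrix_inv A = mat 1 \<and> matrix_inv A ** A = mat 1"
  using assms unfolding invertible_def matrix_inv_def by (rule someI_ex)

lemma minv_right: "invertible A \<Longrightarrow> A ** matrix_inv A = mat 1"
  by (drule minv_both) (erule conjunct1)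
lemma minv_left: "invertible A \<Longrightarrow> matrix_inv A ** A = mat 1"
  by (drule minv_both) (erule conjunct2)

lemma minv_unique:
  fixes A B :: "'a::semiring_1^'n^'n"
  assumes "A ** B = mat 1" "B ** A = mat 1"
  shows "matrix_inv A = B"
proof -
  have inv: "invertible A" using assms unfolding invertible_def by blast
  have "matrix_inv A = (B ** A) ** matrix_inv A" by (simp add: assms)
  also have "\<dots> = B ** (A ** matrix_inv A)" by (simp add: matrix_mul_assoc)
  also have "\<dots> = B" by (simp add: minv_right[OF inv])
  finally show ?thesis .
qed

lemma minv_cramer:
  fixes A :: "complex^'n^'n"
  assumes d: "det A \<noteq> 0"
  shows "matrix_inv A = (\<chi> k j. det (\<chi> i l. if l = k then axis j 1 $ i else A $ i $ l) / det A)"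
proof -
  have inv: "invertible A" using d invertible_det_nz by blast
  have 1: "A *v (matrix_inv A *v axis j 1) = axis j 1" for j
    by (simp add: matrix_vector_mul_assoc minv_right[OF inv])
  have 2: "matrix_inv A *v axis j 1 = (\<chi> k. det (\<chi> i l. if l = k then axis j 1 $ i else A $ i $ l) / det A)" for j
    by (rule cramer[OF d, THEN iffD1]) (rule 1)
  have "matrix_inv A $ k $ j = det (\<chi> i l. if l = k then axis j 1 $ i else A $ i $ l) / det A" for k j
    using arg_cong[OF 2[of j], of "\<lambda>v. v $ k"] by (simp only: mv_axis vec_lambda_beta)
  then show ?thesis by (simp add: vec_eq_iff)
qed

lemma tendsto_det:
  fixes f :: "'b \<Rightarrow> complex^'n^'n"
  assumes "(f \<longlongrightarrow> A) F"
  shows "((\<lambda>z. det (f z)) \<longlongrightarrow> det A) F"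
  unfolding det_def by (intro tendsto_sum tendsto_mult tendsto_const tendsto_prod tendsto_vec_nth assms)

lemma tendsto_minv:
  fixes f :: "'b \<Rightarrow> complex^'n^'n"
  assumes f: "(f \<longlongrightarrow> A) F" and d: "det A \<noteq> 0"
  shows "((\<lambda>z. matrix_inv (f z)) \<longlongrightarrow> matrix_inv A) F"
proof -
  have ev: "\<forall>\<^sub>F z in F. det (f z) \<noteq> 0"
    using tendsto_det[OF f] d by (rule tendsto_imp_eventually_ne)
  let ?C = "\<lambda>B::complex^'n^'n. (\<chi> k j. det (\<chi> i l. if l = k then axis j 1 $ i else B $ i $ l) / det B)"
  have "((\<lambda>z. ?C (f z)) \<longlongrightarrow> ?C A) F"
    apply (intro tendsto_vec_lambda tendsto_divide tendsto_det f d)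
    subgoal for k j i l by (cases "l = k") (simp_all add: tendsto_vec_nth f)
    done
  moreover have "\<forall>\<^sub>F z in F. ?C (f z) = matrix_inv (f z)"
    using ev by eventually_elim (simp add: minv_cramer)
  ultimately show ?thesis
    using minv_cramer[OF d] by (simp add: tendsto_cong[symmetric])
qed

lemma ev_invertible:
  fixes f :: "'b \<Rightarrow> complex^'n^'n"
  assumes f: "(f \<longlongrightarrow> A) F" and d: "invertible A"
  shows "\<forall>\<^sub>F z in F. invertible (f z)"
  using tendsto_imp_eventually_ne[OF tendsto_det[OF f]] d by (simp add: invertible_det_nz)

lemma deriv_minv:
  fixes f :: "real \<Rightarrow> complex^'n^'n"
  assumes f: "(f has_vector_derivative f') (at y)" and inv: "invertible (f y)"
  shows "((\<lambda>z. matrix_inv (f z)) has_vector_derivative - (matrix_inv (f y) ** f' ** matrix_inv (f y))) (at y)"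
proof -
  let ?g = "\<lambda>z. matrix_inv (f z)"
  have fc: "(f \<longlongrightarrow> f y) (at y)"
    using has_vector_derivative_continuous[OF f] by (simp add: continuous_at)
  have d: "det (f y) \<noteq> 0" using inv invertible_det_nz by blast
  have gc: "(?g \<longlongrightarrow> ?g y) (at y)" by (rule tendsto_minv[OF fc d])
  have Q: "((\<lambda>z. (f z - f y) /\<^sub>R (z - y)) \<longlongrightarrow> f') (at y)" using f vd_iff by blast
  have lim: "((\<lambda>z. - (?g z ** ((f z - f y) /\<^sub>R (z - y)) ** ?g y)) \<longlongrightarrow> - (?g y ** f' ** ?g y)) (at y)"
    by (intro tendsto_minus bounded_bilinear.tendsto[OF bb_mm] gc Q tendsto_const)
  have "\<forall>\<^sub>F z in at y. invertible (f z)" by (rule ev_invertible[OF fc inv])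
  then have "\<forall>\<^sub>F z in at y. - (?g z ** ((f z - f y) /\<^sub>R (z - y)) ** ?g y) = (?g z - ?g y) /\<^sub>R (z - y)"
  proof eventually_elim
    case (elim z)
    have "?g z - ?g y = ?g z ** (f y - f z) ** ?g y"
      by (simp add: matrix_sub_ldistrib' matrix_sub_rdistrib' minv_right[OF inv]
          minv_left[OF elim] matrix_mul_assoc[symmetric])
    have "?g z ** ((f z - f y) /\<^sub>R (z - y)) ** ?g y = (?g z ** (f z - f y) ** ?g y) /\<^sub>R (z - y)"
      by (simp only: mm_scaleR_left mm_scaleR_right)
    moreover have "f z - f y = - (f y - f z)" by simp
    ultimately show ?case
      by (simp only: matrix_neg_left' matrix_neg_right' scaleR_minus_right minus_minus
           \<open>?g z - ?g y = ?g z ** (f y - f z) ** ?g y\<close>)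
  qed
  then have "((\<lambda>z. (?g z - ?g y) /\<^sub>R (z - y)) \<longlongrightarrow> - (?g y ** f' ** ?g y)) (at y)"
    using lim tendsto_cong by fastforce
  then show ?thesis using vd_iff by blast
qed

lemma ring_identity:
  fixes S Sd K Kb X E N M W Wb Mx Mxx Nd :: "'a::real_algebra_1"
  assumes ee: "e * e = 1"
    and hM: "M = E - e *\<^sub>R (Kb * X * K)"
    and NM: "N * M = 1" and MN: "M * N = 1"
    and hW: "W = S * K + K * Sd" and hWb: "Wb = Sd * Kb + Kb * S"
    and XS: "X * S = S * X" and SE: "Sd * E = E * Sd"
    and hMx: "Mx = E * Sd + e *\<^sub>R (Kb * S * X * K)"
    and hMxx: "Mxx = E * Sd * Sd - e *\<^sub>R (Kb * S * S * X * K)"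
    and hNd: "Nd = X + e *\<^sub>R (X * K * N * Kb * X)"
  shows "Mx * N * Mx - Mxx = e *\<^sub>R (Wb * Nd * W)"
proof -
  have XS': "X * (S * r) = S * (X * r)" for r by (metis XS mult.assoc)
  have h1: "Mx = Sd * M + e *\<^sub>R (Wb * X * K)"
    by (simp add: hMx hM hWb algebra_simps SE mult.assoc)
  have h2: "Mx = M * Sd + e *\<^sub>R (Kb * X * W)"
    by (simp add: hMx hM hW algebra_simps XS' mult.assoc)
  have "Mx * N * Mx = (Sd * M + e *\<^sub>R (Wb * X * K)) * N * (M * Sd + e *\<^sub>R (Kb * X * W))"
    using h1 h2 by metis
  also have "\<dots> = Sd * (M * N) * M * Sd + e *\<^sub>R (Sd * (M * N) * Kb * X * W)
      + e *\<^sub>R (Wb * X * K * (N * M) * Sd) + (e * e) *\<^sub>R (Wb * X * K * N * Kb * X * W)"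
    by (simp add: algebra_simps)
  also have "\<dots> = Sd * M * Sd + e *\<^sub>R (Sd * Kb * X * W)
      + e *\<^sub>R (Wb * X * K * Sd) + (Wb * X * K * N * Kb * X * W)"
    by (simp add: MN NM ee)
  finally have A: "Mx * N * Mx = Sd * M * Sd + e *\<^sub>R (Sd * Kb * X * W)
      + e *\<^sub>R (Wb * X * K * Sd) + (Wb * X * K * N * Kb * X * W)" .
  have B: "e *\<^sub>R (Wb * Nd * W) = e *\<^sub>R (Wb * X * W) + Wb * X * K * N * Kb * X * W"
    by (simp add: hNd algebra_simps ee)
  have C: "Sd * Kb * X * W + Wb * X * K * Sd + Kb * S * S * X * K = Wb * X * W + Sd * Kb * X * K * Sd"
    by (simp add: hW hWb distrib_left distrib_right mult.assoc XS' add_ac)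
  have D: "Sd * M * Sd = E * Sd * Sd - e *\<^sub>R (Sd * Kb * X * K * Sd)"
    by (simp add: hM algebra_simps SE)
  have "Sd * M * Sd + e *\<^sub>R (Sd * Kb * X * W) + e *\<^sub>R (Wb * X * K * Sd)
       = Mxx + e *\<^sub>R (Wb * X * W)"
  proof -
    have "e *\<^sub>R (Sd * Kb * X * W) + e *\<^sub>R (Wb * X * K * Sd) + e *\<^sub>R (Kb * S * S * X * K)
       = e *\<^sub>R (Wb * X * W) + e *\<^sub>R (Sd * Kb * X * K * Sd)"
      using arg_cong[OF C, of "scaleR e"] by (simp only: scaleR_add_right)
    then show ?thesis unfolding D hMxx by (simp add: algebra_simps)
  qed
  then show ?thesis unfolding A B by (simp add: algebra_simps)
qed

lemma ring_identity2:
  fixes K Kb X Xd E F N M Md :: "'a::real_algebra_1"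
  assumes ee: "e * e = 1"
    and hM: "M = E - e *\<^sub>R (Kb * X * K)"
    and hMd: "Md = F - e *\<^sub>R (K * Xd * Kb)"
    and NM: "N * M = 1" and MN: "M * N = 1"
    and FX: "F * X = 1" and XdE: "Xd * E = 1"
    and NdMd: "Nd * Md = 1"
  shows "Nd = X + e *\<^sub>R (X * K * N * Kb * X)"
proof -
  have XdMN: "Xd = N - e *\<^sub>R (Xd * Kb * X * K * N)"
  proof -
    have "Xd = Xd * (M * N)" by (simp add: MN)
    also have "\<dots> = (Xd * E) * N - e *\<^sub>R (Xd * Kb * X * K * N)"
      by (simp add: hM algebra_simps)
    finally show ?thesis by (simp add: XdE)
  qed
  have P: "Md * (X + e *\<^sub>R (X * K * N * Kb * X)) = 1"
  proof -
    have "Md * (X + e *\<^sub>R (X * K * N * Kb * X)) =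
       (F * X) + e *\<^sub>R ((F * X) * K * N * Kb * X) - e *\<^sub>R (K * Xd * Kb * X)
       - (e * e) *\<^sub>R (K * Xd * Kb * X * K * N * Kb * X)"
      by (simp add: hMd algebra_simps)
    also have "\<dots> = 1 + e *\<^sub>R (K * (N - Xd - e *\<^sub>R (Xd * Kb * X * K * N)) * Kb * X)"
      by (simp add: FX ee algebra_simps)
    also have "\<dots> = 1"
    proof -
      have "N - Xd - e *\<^sub>R (Xd * Kb * X * K * N) = 0"
        using XdMN by (simp add: algebra_simps)
      then show ?thesis by simp
    qed
    finally show ?thesis .
  qed
  have "Nd = Nd * (Md * (X + e *\<^sub>R (X * K * N * Kb * X)))" by (simp add: P)
  also have "\<dots> = X + e *\<^sub>R (X * K * N * Kb * X)" by (simp add: mult.assoc[symmetric] NdMd)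
  finally show ?thesis .
qed

lemma hvd_mm:
  fixes f :: "real \<Rightarrow> complex^'n^'m" and g :: "real \<Rightarrow> complex^'p^'n"
  assumes "(f has_vector_derivative f') (at z)" "(g has_vector_derivative g') (at z)"
  shows "((\<lambda>z. f z ** g z) has_vector_derivative (f z ** g' + f' ** g z)) (at z)"
  using bounded_bilinear.has_vector_derivative[OF bb_mm assms] .

lemma hvd_const: "((\<lambda>z. C) has_vector_derivative 0) (at z)"
  by (rule has_vector_derivative_const)

lemma hvd_cadj:
  fixes f :: "real \<Rightarrow> complex^'n^'m"
  assumes "(f has_vector_derivative f') (at z)"
  shows "((\<lambda>z. cadj (f z)) has_vector_derivative cadj f') (at z)"
  using bounded_linear.has_vector_derivative[OF bl_cadj assms] .

lemma hvd_scaleR: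
  fixes f :: "real \<Rightarrow> complex^'n^'m"
  assumes "(f has_vector_derivative f') (at z)"
  shows "((\<lambda>z. c *\<^sub>R f z) has_vector_derivative c *\<^sub>R f') (at z)"
  using bounded_linear.has_vector_derivative[OF bounded_linear_scaleR_right assms] .

lemma hvd_sandwich:
  fixes f :: "real \<Rightarrow> complex^'n^'m" and P :: "complex^'m^'k" and Q :: "complex^'p^'n"
  assumes "(f has_vector_derivative f') (at z)"
  shows "((\<lambda>z. P ** f z ** Q) has_vector_derivative P ** f' ** Q) (at z)"
  using hvd_mm[OF hvd_mm[OF hvd_const[of P] assms] hvd_const[of Q]] by simp

lemma Xi_eq: "Xi S x t = mexp (x *\<^sub>R (- S) + t *\<^sub>R (- msc \<i> (S ** S)))"
proof -
  have "msc (\<i> * complex_of_real t) (S ** S) = t *\<^sub>R msc \<i> (S ** S)"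
    by (simp add: msc_def vec_eq_iff of_real_def)
  then show ?thesis by (simp add: Xi_def msc_real)
qed

lemma AB_comm: "(- S) ** (- msc \<i> (S ** S)) = (- msc \<i> (S ** S)) ** (- (S::complex^'n^'n))"
  by (simp add: matrix_neg_left' matrix_neg_right' msc_mm_left msc_mm_right matrix_mul_assoc msc_minus)

lemma mexp_dx:
  fixes A B :: "complex^'n^'n"
  assumes AB: "A ** B = B ** A"
  shows "((\<lambda>x. mexp (x *\<^sub>R A + t *\<^sub>R B)) has_vector_derivative A ** mexp (x *\<^sub>R A + t *\<^sub>R B)) (at x)"
  by (rule mexp_deriv) (simp add: mm_scaleR_left mm_scaleR_right AB)

lemma mexp_dt:
  fixes A B :: "complex^'n^'n"
  assumes AB: "A ** B = B ** A"
  shows "((\<lambda>t. mexp (x *\<^sub>R A + t *\<^sub>R B)) has_vector_derivative B ** mexp (x *\<^sub>R A + t *\<^sub>R B)) (at t)"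
proof -
  have "((\<lambda>t. mexp (t *\<^sub>R B + x *\<^sub>R A)) has_vector_derivative B ** mexp (t *\<^sub>R B + x *\<^sub>R A)) (at t)"
    by (rule mexp_deriv) (simp add: mm_scaleR_left mm_scaleR_right AB)
  then show ?thesis by (simp add: add.commute)
qed

lemma mexp_comm_lin:
  fixes A B P :: "complex^'n^'n"
  assumes "P ** A = A ** P" "P ** B = B ** P"
  shows "P ** mexp (x *\<^sub>R A + t *\<^sub>R B) = mexp (x *\<^sub>R A + t *\<^sub>R B) ** P"
  by (rule mexp_commute)
     (simp add: matrix_add_ldistrib matrix_add_rdistrib' mm_scaleR_left mm_scaleR_right assms)

lemma emb_zero: "emb 0 = 0"
  using emb_scaleR[of 0 "0::complex^'n^'n"] by simp

lemma final_alg: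
  fixes N M Mx Mxx Mt E Xm S Sd K Kb :: "complex^'n^'n"
    and V :: "complex^'m1^'n" and Vb :: "complex^'m2^'n"
  assumes ee: "\<epsilon> * \<epsilon> = 1"
    and hM: "M = E - \<epsilon> *\<^sub>R (Kb ** Xm ** K)"
    and inv: "invertible M" and hN: "N = matrix_inv M"
    and XS: "Xm ** S = S ** Xm" and SE: "Sd ** E = E ** Sd"
    and hMx: "Mx = E ** Sd + \<epsilon> *\<^sub>R (Kb ** S ** Xm ** K)"
    and hMxx: "Mxx = E ** Sd ** Sd - \<epsilon> *\<^sub>R (Kb ** S ** S ** Xm ** K)"
    and Mti: "msc \<i> Mt = Mxx"
    and hNd: "cadj N = Xm + \<epsilon> *\<^sub>R (Xm ** K ** N ** Kb ** Xm)"
    and hW: "S ** K + K ** Sd = V ** cadj V" and hWb: "Sd ** Kb + Kb ** S = Vb ** cadj Vb"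
  shows "msc \<i> (cadj V ** (- (N ** Mt ** N)) ** Vb)
       + cadj V ** (- ((N ** Mx) ** (- (N ** Mx ** N)) + (N ** Mxx + (- (N ** Mx ** N)) ** Mx) ** N)) ** Vb
       - msc (2 * complex_of_real \<epsilon>) ((cadj V ** N ** Vb) ** cadj (cadj V ** N ** Vb) ** (cadj V ** N ** Vb)) = 0"
proof -
  define W where "W = V ** cadj V"
  define Wb where "Wb = Vb ** cadj Vb"
  define Y1 where "Y1 = - (N ** Mxx ** N)"
  define Y2 where "Y2 = - ((N ** Mx) ** (- (N ** Mx ** N)) + (N ** Mxx + (- (N ** Mx ** N)) ** Mx) ** N)"
  define Y3 where "Y3 = (2 * \<epsilon>) *\<^sub>R (N ** Wb ** cadj N ** W ** N)"
  have s1: "msc \<i> (cadj V ** (- (N ** Mt ** N)) ** Vb) = cadj V ** Y1 ** Vb"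
    by (simp add: Y1_def msc_mm_left msc_mm_right msc_minus Mti[symmetric] matrix_neg_left' matrix_neg_right')
  have s3: "msc (2 * complex_of_real \<epsilon>) ((cadj V ** N ** Vb) ** cadj (cadj V ** N ** Vb) ** (cadj V ** N ** Vb))
       = cadj V ** Y3 ** Vb"
  proof -
    have "2 * complex_of_real \<epsilon> = complex_of_real (2 * \<epsilon>)" by simp
    then show ?thesis
      by (simp only: Y3_def msc_real W_def Wb_def cadj_mm cadj_cadj mm_scaleR_left mm_scaleR_right
          matrix_mul_assoc)
  qed
  have Z: "Y1 + Y2 - Y3 = 0"
  proof -
    have MN: "M ** N = mat 1" and NM: "N ** M = mat 1" using minv_right[OF inv] minv_left[OF inv] hN by auto
    have r: "emb Mx * emb N * emb Mx - emb Mxx = \<epsilon> *\<^sub>R (emb Wb * emb (cadj N) * emb W)"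
    proof (rule ring_identity[OF ee])
      show "emb M = emb E - \<epsilon> *\<^sub>R (emb Kb * emb Xm * emb K)"
        using hM by (simp add: emb_diff emb_scaleR emb_mult)
      show "emb N * emb M = 1" using NM by (metis emb_mult emb_one)
      show "emb M * emb N = 1" using MN by (metis emb_mult emb_one)
      show "emb W = emb S * emb K + emb K * emb Sd"
        by (simp add: W_def hW[symmetric] emb_add emb_mult)
      show "emb Wb = emb Sd * emb Kb + emb Kb * emb S"
        by (simp add: Wb_def hWb[symmetric] emb_add emb_mult)
      show "emb Xm * emb S = emb S * emb Xm" using XS by (metis emb_mult)
      show "emb Sd * emb E = emb E * emb Sd" using SE by (metis emb_mult)
      show "emb Mx = emb E * emb Sd + \<epsilon> *\<^sub>R (emb Kb * emb S * emb Xm * emb K)"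
        using hMx by (simp add: emb_add emb_scaleR emb_mult)
      show "emb Mxx = emb E * emb Sd * emb Sd - \<epsilon> *\<^sub>R (emb Kb * emb S * emb S * emb Xm * emb K)"
        using hMxx by (simp add: emb_diff emb_scaleR emb_mult)
      show "emb (cadj N) = emb Xm + \<epsilon> *\<^sub>R (emb Xm * emb K * emb N * emb Kb * emb Xm)"
        using hNd by (simp add: emb_add emb_scaleR emb_mult)
    qed
    have "emb (Y1 + Y2 - Y3) = (2::real) *\<^sub>R (emb N * (emb Mx * emb N * emb Mx - emb Mxx
            - \<epsilon> *\<^sub>R (emb Wb * emb (cadj N) * emb W)) * emb N)"
      by (simp add: Y1_def Y2_def Y3_def emb_add emb_diff emb_minus emb_scaleR emb_mult algebra_simps scaleR_2)
    also have "\<dots> = 0" using r by simp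
    finally show ?thesis using emb_inj emb_zero by metis
  qed
  have "msc \<i> (cadj V ** (- (N ** Mt ** N)) ** Vb)
       + cadj V ** (- ((N ** Mx) ** (- (N ** Mx ** N)) + (N ** Mxx + (- (N ** Mx ** N)) ** Mx) ** N)) ** Vb
       - msc (2 * complex_of_real \<epsilon>) ((cadj V ** N ** Vb) ** cadj (cadj V ** N ** Vb) ** (cadj V ** N ** Vb))
     = cadj V ** Y1 ** Vb + cadj V ** Y2 ** Vb - cadj V ** Y3 ** Vb"
    unfolding s1 s3 Y2_def ..
  also have "\<dots> = cadj V ** (Y1 + Y2 - Y3) ** Vb"
    by (simp add: matrix_add_ldistrib matrix_add_rdistrib' matrix_sub_ldistrib' matrix_sub_rdistrib')
  also have "\<dots> = 0" by (simp add: Z)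
  finally show ?thesis .
qed

lemma msc_neg1: "msc (-1) A = - A"
  by (simp add: msc_def vec_eq_iff)

theorem proposition7p1:
  fixes \<epsilon> :: real
    and S K Kbar :: "complex^'n^'n"
    and V :: "complex^'m1^'n"
    and Vbar :: "complex^'m2^'n"
    and x t :: real
  assumes eps: "\<epsilon> = 1 \<or> \<epsilon> = -1"
    and herm_K: "cadj K = K"
    and herm_Kbar: "cadj Kbar = Kbar"
    and sylv1: "S ** K + K ** cadj S = V ** cadj V"
    and sylv2: "cadj S ** Kbar + Kbar ** S = Vbar ** cadj Vbar"
    and inv: "invertible (Mmat \<epsilon> S K Kbar x t)"
  shows "\<exists>qt qxx.
           ((\<lambda>s. qsol \<epsilon> S K Kbar V Vbar x s) has_vector_derivative qt) (at t) \<and>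
           (\<forall>\<^sub>F y in nhds x. (\<lambda>z. qsol \<epsilon> S K Kbar V Vbar z t) differentiable (at y)) \<and>
           ((\<lambda>y. vector_derivative (\<lambda>z. qsol \<epsilon> S K Kbar V Vbar z t) (at y))
              has_vector_derivative qxx) (at x) \<and>
           msc \<i> qt + qxx
             - msc (2 * complex_of_real \<epsilon>)
                 (qsol \<epsilon> S K Kbar V Vbar x t ** cadj (qsol \<epsilon> S K Kbar V Vbar x t)
                   ** qsol \<epsilon> S K Kbar V Vbar x t) = 0"
proof -
  have ee: "\<epsilon> * \<epsilon> = 1" using eps by auto
  define A where "A = - S"
  define B where "B = - msc \<i> (S ** S)"
  have AB: "A ** B = B ** A" using AB_comm unfolding A_def B_def .
  have AB': "(- A) ** (- B) = (- B) ** (- A)" by (simp add: matrix_neg_left' matrix_neg_right' AB)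
  define X where "X = (\<lambda>x t. mexp (x *\<^sub>R A + t *\<^sub>R B))"
  define F where "F = (\<lambda>x t. mexp (x *\<^sub>R (- A) + t *\<^sub>R (- B)))"
  have XiX: "Xi S x t = X x t" for x t unfolding X_def A_def B_def by (rule Xi_eq)
  have Fm: "F x t = mexp (- (x *\<^sub>R A + t *\<^sub>R B))" for x t by (simp add: F_def)
  have FX: "F x t ** X x t = mat 1" for x t unfolding Fm X_def by (rule mexp_inv2)
  have XF: "X x t ** F x t = mat 1" for x t unfolding Fm X_def by (rule mexp_inv1)
  define E where "E = (\<lambda>x t. cadj (F x t))"
  have invE: "matrix_inv (cadj (X x t)) = E x t" for x t
    by (rule minv_unique) (simp_all add: E_def cadj_mm[symmetric] FX XF)
  define M where "M = (\<lambda>x t. E x t - \<epsilon> *\<^sub>R (Kbar ** X x t ** K))"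
  have Mmat_eq: "Mmat \<epsilon> S K Kbar x t = M x t" for x t
    by (simp add: Mmat_def M_def XiX invE msc_real)
  have q_eq: "qsol \<epsilon> S K Kbar V Vbar x t = cadj V ** matrix_inv (M x t) ** Vbar" for x t
    by (simp add: qsol_def Mmat_eq)
  define Sd where "Sd = cadj S"
  define Mx where "Mx = (\<lambda>x t. E x t ** Sd + \<epsilon> *\<^sub>R (Kbar ** S ** X x t ** K))"
  define Mxx where "Mxx = (\<lambda>x t. E x t ** Sd ** Sd - \<epsilon> *\<^sub>R (Kbar ** S ** S ** X x t ** K))"
  define Mt where "Mt = (\<lambda>x t. E x t ** cadj (- B) - \<epsilon> *\<^sub>R (Kbar ** (B ** X x t) ** K))"
  have dX_x: "((\<lambda>z. X z s) has_vector_derivative A ** X z s) (at z)" for z s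
    unfolding X_def by (rule mexp_dx[OF AB])
  have dE_x: "((\<lambda>z. E z s) has_vector_derivative E z s ** Sd) (at z)" for z s
  proof -
    have "((\<lambda>z. E z s) has_vector_derivative cadj ((- A) ** F z s)) (at z)"
      unfolding E_def F_def by (rule hvd_cadj[OF mexp_dx[OF AB']])
    then show ?thesis by (simp add: cadj_mm E_def Sd_def A_def)
  qed
  have dM_x: "((\<lambda>z. M z s) has_vector_derivative Mx z s) (at z)" for z s
  proof -
    have "((\<lambda>z. M z s) has_vector_derivative E z s ** Sd - \<epsilon> *\<^sub>R (Kbar ** (A ** X z s) ** K)) (at z)"
      unfolding M_def by (intro has_vector_derivative_diff dE_x hvd_scaleR hvd_sandwich dX_x)
    moreover have "E z s ** Sd - \<epsilon> *\<^sub>R (Kbar ** (A ** X z s) ** K) = Mx z s"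
      by (simp add: Mx_def A_def matrix_neg_left' matrix_neg_right' matrix_mul_assoc)
    ultimately show ?thesis by simp
  qed
  have dMx_x: "((\<lambda>z. Mx z s) has_vector_derivative Mxx z s) (at z)" for z s
  proof -
    have "((\<lambda>z. Mx z s) has_vector_derivative E z s ** Sd ** Sd + \<epsilon> *\<^sub>R ((Kbar ** S) ** (A ** X z s) ** K)) (at z)"
      unfolding Mx_def
      using has_vector_derivative_add[OF hvd_mm[OF dE_x[where z=z and s=s] hvd_const[of Sd]]
          hvd_scaleR[OF hvd_sandwich[OF dX_x[where z=z and s=s], of "Kbar ** S" K], of \<epsilon>]] by simp
    moreover have "E z s ** Sd ** Sd + \<epsilon> *\<^sub>R ((Kbar ** S) ** (A ** X z s) ** K) = Mxx z s"
      by (simp add: Mxx_def A_def matrix_neg_left' matrix_neg_right' matrix_mul_assoc)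
    ultimately show ?thesis by simp
  qed
  have dX_t: "((\<lambda>s. X z s) has_vector_derivative B ** X z s) (at s)" for z s
    unfolding X_def by (rule mexp_dt[OF AB])
  have dE_t: "((\<lambda>s. E z s) has_vector_derivative E z s ** cadj (- B)) (at s)" for z s
  proof -
    have "((\<lambda>s. E z s) has_vector_derivative cadj ((- B) ** F z s)) (at s)"
      unfolding E_def F_def by (rule hvd_cadj[OF mexp_dt[OF AB']])
    then show ?thesis by (simp add: cadj_mm E_def)
  qed
  have dM_t: "((\<lambda>s. M z s) has_vector_derivative Mt z s) (at s)" for z s
    unfolding M_def Mt_def by (intro has_vector_derivative_diff dE_t hvd_scaleR hvd_sandwich dX_t)
  have Mti: "msc \<i> (Mt z s) = Mxx z s" for z s
    by (simp add: Mt_def Mxx_def B_def Sd_def msc_diff msc_scaleR msc_mm_left msc_mm_right cadj_minus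
        cadj_msc cadj_mm msc_msc msc_minus matrix_neg_left' matrix_neg_right' matrix_mul_assoc msc_add msc_neg1)
  have inv0: "invertible (M x t)" using inv Mmat_eq by simp
  have Mc: "((\<lambda>z. M z t) \<longlongrightarrow> M x t) (at x)"
    using has_vector_derivative_continuous[OF dM_x[where z=x and s=t]] by (simp add: continuous_at)
  have evat: "\<forall>\<^sub>F z in at x. invertible (M z t)" by (rule ev_invertible[OF Mc inv0])
  have evN: "\<forall>\<^sub>F z in nhds x. invertible (M z t)"
    using evat inv0 unfolding eventually_at_filter by (auto elim: eventually_mono)
  define N where "N = (\<lambda>z s. matrix_inv (M z s))"
  have dN_x: "((\<lambda>z. N z s) has_vector_derivative - (N z s ** Mx z s ** N z s)) (at z)"
    if "invertible (M z s)" for z s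
    unfolding N_def by (rule deriv_minv[OF dM_x that])
  have dN_t: "((\<lambda>s. N z s) has_vector_derivative - (N z s ** Mt z s ** N z s)) (at s)"
    if "invertible (M z s)" for z s
    unfolding N_def by (rule deriv_minv[OF dM_t that])
  have qN: "qsol \<epsilon> S K Kbar V Vbar z s = cadj V ** N z s ** Vbar" for z s
    by (simp add: q_eq N_def)
  have dq_x: "((\<lambda>z. qsol \<epsilon> S K Kbar V Vbar z t) has_vector_derivative
       cadj V ** (- (N z t ** Mx z t ** N z t)) ** Vbar) (at z)" if "invertible (M z t)" for z
    unfolding qN by (rule hvd_sandwich[OF dN_x[OF that]])
  obtain U where U: "open U" "x \<in> U" "\<And>z. z \<in> U \<Longrightarrow> invertible (M z t)"
    using evN unfolding eventually_nhds by blast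
  let ?qt = "cadj V ** (- (N x t ** Mt x t ** N x t)) ** Vbar"
  let ?D = "- ((N x t ** Mx x t) ** (- (N x t ** Mx x t ** N x t))
             + (N x t ** Mxx x t + (- (N x t ** Mx x t ** N x t)) ** Mx x t) ** N x t)"
  let ?qxx = "cadj V ** ?D ** Vbar"
  have P1: "((\<lambda>s. qsol \<epsilon> S K Kbar V Vbar x s) has_vector_derivative ?qt) (at t)"
    unfolding qN by (rule hvd_sandwich[OF dN_t[OF inv0]])
  have P2: "\<forall>\<^sub>F y in nhds x. (\<lambda>z. qsol \<epsilon> S K Kbar V Vbar z t) differentiable (at y)"
    using evN by eventually_elim (use dq_x in \<open>auto simp: differentiable_def has_vector_derivative_def\<close>)
  have P3: "((\<lambda>y. vector_derivative (\<lambda>z. qsol \<epsilon> S K Kbar V Vbar z t) (at y))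
              has_vector_derivative ?qxx) (at x)"
  proof (rule has_vector_derivative_transform_within_open[OF _ U(1) U(2)])
    show "((\<lambda>y. cadj V ** (- (N y t ** Mx y t ** N y t)) ** Vbar) has_vector_derivative ?qxx) (at x)"
      by (rule hvd_sandwich[OF has_vector_derivative_minus[OF hvd_mm[OF hvd_mm[OF dN_x[OF inv0] dMx_x] dN_x[OF inv0]]]])
    show "cadj V ** (- (N y t ** Mx y t ** N y t)) ** Vbar =
          vector_derivative (\<lambda>z. qsol \<epsilon> S K Kbar V Vbar z t) (at y)" if "y \<in> U" for y
      using vector_derivative_at[OF dq_x[OF U(3)[OF that]]] by simp
  qed
  have XS: "X x t ** S = S ** X x t"
    unfolding X_def by (rule mexp_comm_lin[symmetric]) (simp_all add: A_def B_def
        matrix_neg_left' matrix_neg_right' msc_mm_left msc_mm_right matrix_mul_assoc)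
  have SF: "S ** F x t = F x t ** S"
    unfolding F_def by (rule mexp_comm_lin) (simp_all add: A_def B_def
        matrix_neg_left' matrix_neg_right' msc_mm_left msc_mm_right matrix_mul_assoc msc_minus)
  have SE: "Sd ** E x t = E x t ** Sd"
    using arg_cong[OF SF, of cadj] by (simp add: Sd_def E_def cadj_mm)
  have hNd: "cadj (N x t) = X x t + \<epsilon> *\<^sub>R (X x t ** K ** N x t ** Kbar ** X x t)"
  proof -
    have MN: "M x t ** N x t = mat 1" and NM: "N x t ** M x t = mat 1"
      using minv_right[OF inv0] minv_left[OF inv0] by (auto simp: N_def)
    have cM: "cadj (M x t) = F x t - \<epsilon> *\<^sub>R (K ** cadj (X x t) ** Kbar)"
      by (simp add: M_def E_def cadj_diff cadj_scaleR cadj_mm herm_K herm_Kbar matrix_mul_assoc)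
    have "emb (cadj (N x t)) = emb (X x t) + \<epsilon> *\<^sub>R (emb (X x t) * emb K * emb (N x t) * emb Kbar * emb (X x t))"
    proof (rule ring_identity2[OF ee])
      show "emb (M x t) = emb (E x t) - \<epsilon> *\<^sub>R (emb Kbar * emb (X x t) * emb K)"
        by (simp add: M_def emb_diff emb_scaleR emb_mult)
      show "emb (cadj (M x t)) = emb (F x t) - \<epsilon> *\<^sub>R (emb K * emb (cadj (X x t)) * emb Kbar)"
        by (simp add: cM emb_diff emb_scaleR emb_mult)
      show "emb (N x t) * emb (M x t) = 1" by (simp add: emb_mult[symmetric] NM emb_one)
      show "emb (M x t) * emb (N x t) = 1" by (simp add: emb_mult[symmetric] MN emb_one)
      show "emb (F x t) * emb (X x t) = 1" by (simp add: emb_mult[symmetric] FX emb_one)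
      have "cadj (X x t) ** E x t = mat 1" by (simp add: E_def cadj_mm[symmetric] FX)
      then show "emb (cadj (X x t)) * emb (E x t) = 1" by (simp add: emb_mult[symmetric] emb_one)
      have "cadj (N x t) ** cadj (M x t) = mat 1" by (simp add: cadj_mm[symmetric] MN)
      then show "emb (cadj (N x t)) * emb (cadj (M x t)) = 1" by (simp add: emb_mult[symmetric] emb_one)
    qed
    then have "emb (cadj (N x t)) = emb (X x t + \<epsilon> *\<^sub>R (X x t ** K ** N x t ** Kbar ** X x t))"
      by (simp add: emb_add emb_scaleR emb_mult)
    then show ?thesis by (rule emb_inj)
  qed
  have P4: "msc \<i> ?qt + ?qxx - msc (2 * complex_of_real \<epsilon>)
                 (qsol \<epsilon> S K Kbar V Vbar x t ** cadj (qsol \<epsilon> S K Kbar V Vbar x t)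
                   ** qsol \<epsilon> S K Kbar V Vbar x t) = 0"
    unfolding qN
    by (rule final_alg[OF ee _ inv0 _ XS SE _ _ Mti hNd sylv1[folded Sd_def] sylv2[folded Sd_def]])
       (simp_all add: M_def N_def Mx_def Mxx_def)
  show ?thesis using P1 P2 P3 P4 by blast
qed

end
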